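(* (a) ${\mathrm{stick}}\leq{\mathrm{stick}}'$. (b) If ${\mathrm{stick}}<\aleph_{\omega_1}$ then ${\mathrm{stick}}={\mathrm{stick}}'$; in particular then ${\mathrm{stick}}''\leq{\mathrm{stick}}$. (c) If $\lambda\leq\lambda'$ are cardinals then ${\mathrm{stick}}_\lambda\leq{\mathrm{stick}}_{\lambda'}$. (d) ${\mathrm{stick}}\leq{\mathrm{stick}}_{{\mathrm{stick}}}\leq{\mathrm{stick}}'$.
   Context: ${\mathrm{stick}}$ is the least cardinality of $X\subseteq[\omega_1]^{\aleph_0}$ such that every $y\in[\omega_1]^{\aleph_1}$ has a subset in $X$. ${\mathrm{stick}}'$ is the least cardinal $\kappa\geq\aleph_1$ for which there is $X\subseteq[\kappa]^{\aleph_0}$ with $|X|=\kappa$ such that every $y\in[\kappa]^{\aleph_1}$ has a subset in $X$. ${\mathrm{stick}}''$ is the least cardinal $\kappa\geq\aleph_1$ for which there is $X\subseteq[\kappa]^{\aleph_0}$ with $|X|=\kappa$ such that every $y\in[\kappa]^{\kappa}$ has a subset in $X$. For an (uncountable) cardinal $\lambda$, ${\mathrm{stick}}_\lambda$ is the least cardinality of $X\subseteq[\lambda]^{\aleph_0}$ such that every $y\in[\lambda]^{\aleph_1}$ has a subset in $X$. *)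

theory Defs
  imports Main "HOL-Library.Countable_Set"
begin

unbundle cardinal_syntax

text \<open>Cardinals are represented (up to =o) by card_of relations of sets; aleph_1 is
  cardSuc natLeq.  [K]^aleph0 = countably infinite subsets of K,
  [K]^aleph1 = subsets of K of cardinality aleph_1.\<close>

definition aleph1 :: "nat set rel" where
  "aleph1 = cardSuc natLeq"

definition omega1 :: "nat set set" where
  "omega1 = Field aleph1"

definition ctbl_subsets :: "'a set \<Rightarrow> 'a set set" where
  "ctbl_subsets K = {x. x \<subseteq> K \<and> countable x \<and> infinite x}"

definition stick_family :: "'a set \<Rightarrow> 'a set set \<Rightarrow> bool" where
  "stick_family L X \<longleftrightarrow> X \<subseteq> ctbl_subsets L \<and>
     (\<forall>y. y \<subseteq> L \<and> (card_of y) =o aleph1 \<longrightarrow> (\<exists>x\<in>X. x \<subseteq> y))"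

text \<open>stick_lambda for lambda = (card_of L): the least cardinality of a stick-family on L
  (a cardinal, represented as the card_of relation of a minimal family).\<close>
definition stick_lam :: "'a set \<Rightarrow> 'a set rel" where
  "stick_lam L = (SOME r. \<exists>X. stick_family L X \<and> r = (card_of X) \<and>
       (\<forall>X'. stick_family L X' \<longrightarrow> (card_of X) \<le>o (card_of X')))"

definition stick :: "nat set set rel" where
  "stick = stick_lam omega1"

text \<open>Candidate cardinals kappa for stick' and stick''.  They are represented by
  sets K of type nat set set (a type of size 2^2^aleph0, which is at least every
  candidate needed, as stick' and stick'' are at most 2^aleph0).\<close>
definition stick'_witness :: "'a set \<Rightarrow> bool" where
  "stick'_witness K \<longleftrightarrow> aleph1 \<le>o (card_of K) \<and>
     (\<exists>X. X \<subseteq> ctbl_subsets K \<and> (card_of X) =o (card_of K) \<and>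
        (\<forall>y. y \<subseteq> K \<and> (card_of y) =o aleph1 \<longrightarrow> (\<exists>x\<in>X. x \<subseteq> y)))"

definition stick''_witness :: "'a set \<Rightarrow> bool" where
  "stick''_witness K \<longleftrightarrow> aleph1 \<le>o (card_of K) \<and>
     (\<exists>X. X \<subseteq> ctbl_subsets K \<and> (card_of X) =o (card_of K) \<and>
        (\<forall>y. y \<subseteq> K \<and> (card_of y) =o (card_of K) \<longrightarrow> (\<exists>x\<in>X. x \<subseteq> y)))"

definition stick' :: "nat set rel" where
  "stick' = (SOME r. \<exists>K::nat set set. stick'_witness K \<and> r = (card_of K) \<and>
       (\<forall>K'::nat set set. stick'_witness K' \<longrightarrow> (card_of K) \<le>o (card_of K')))"

definition stick'' :: "nat set rel" where
  "stick'' = (SOME r. \<exists>K::nat set set. stick''_witness K \<and> r = (card_of K) \<and>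
       (\<forall>K'::nat set set. stick''_witness K' \<longrightarrow> (card_of K) \<le>o (card_of K')))"

text \<open>kappa < aleph_(omega_1), for a cardinal kappa = |Field r|: the infinite cardinals
  at most kappa form a countable set (kappa = aleph_alpha with alpha < omega_1).\<close>
definition below_aleph_omega1 :: "'a rel \<Rightarrow> bool" where
  "below_aleph_omega1 r \<longleftrightarrow> (\<exists>F::'a set set. countable F \<and>
     (\<forall>A. A \<subseteq> Field r \<and> infinite A \<longrightarrow> (\<exists>B\<in>F. (card_of A) =o (card_of B))))"

end

theory Submission imports Defs "HOL-Library.Countable_Set_Type"
begin

lemma aleph1_Card: "Card_order aleph1"
  unfolding aleph1_def by (simp add: cardSuc_Card_order natLeq_Card_order)

lemma omega1_iso: "|omega1| =o aleph1"
  unfolding omega1_def using aleph1_Card card_of_Field_ordIso by blast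

lemma aleph1_le_iff: "aleph1 \<le>o |A| \<longleftrightarrow> uncountable A"
proof -
  have "aleph1 \<le>o |A| \<longleftrightarrow> natLeq <o |A|"
    unfolding aleph1_def using cardSuc_ordLess_ordLeq[OF natLeq_Card_order card_of_Card_order] by blast
  also have "\<dots> \<longleftrightarrow> \<not> |A| \<le>o natLeq"
    using not_ordLeq_iff_ordLess[OF natLeq_Well_order card_of_Well_order] by blast
  finally show ?thesis using countable_card_le_natLeq by blast
qed

lemma le_aleph1_iso: "|A| \<le>o aleph1 \<Longrightarrow> uncountable A \<Longrightarrow> |A| =o aleph1"
  using aleph1_le_iff ordIso_iff_ordLeq by blast

lemma omega1_unc: "uncountable omega1"
  using aleph1_le_iff omega1_iso ordIso_iff_ordLeq by blast

lemma ctbl_family: "stick_family L (ctbl_subsets L)"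
  unfolding stick_family_def ctbl_subsets_def
proof (intro conjI allI impI)
  fix y assume y: "y \<subseteq> L \<and> |y| =o aleph1"
  then have "uncountable y" using aleph1_le_iff ordIso_iff_ordLeq by blast
  then have "infinite y" using countable_finite by blast
  then obtain C where "C \<subseteq> y" "countable C" "infinite C" using infinite_countable_subset' by blast
  then show "\<exists>x\<in>{x. x \<subseteq> L \<and> countable x \<and> infinite x}. x \<subseteq> y" using y by blast
qed auto

lemma stick_lam_ex: "\<exists>X. stick_family L X \<and> stick_lam L = |X| \<and>
       (\<forall>X'. stick_family L X' \<longrightarrow> |X| \<le>o |X'| )"
proof -
  let ?R = "{|X| | X. stick_family L X}"
  have ne: "?R \<noteq> {}" using ctbl_family by blast
  have wo: "\<forall>r\<in>?R. Well_order r" using card_of_Well_order by blast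
  obtain r where "r \<in> ?R" "\<forall>r'\<in>?R. r \<le>o r'" using exists_minim_Well_order[OF ne wo] by (elim bexE)
  then have ex: "\<exists>r. \<exists>X. stick_family L X \<and> r = |X| \<and> (\<forall>X'. stick_family L X' \<longrightarrow> |X| \<le>o |X'| )"
    by blast
  show ?thesis using someI_ex[OF ex] unfolding stick_lam_def by metis
qed

lemma stick_lam_le: "stick_family L X \<Longrightarrow> stick_lam L \<le>o |X|"
  using stick_lam_ex by metis

lemma transfer_family:
  assumes f: "inj_on f L" "f ` L \<subseteq> L'" and X': "stick_family L' X'"
  shows "\<exists>X. stick_family L X \<and> |X| \<le>o |X'|"
proof -
  define X where "X = (\<lambda>x. L \<inter> f -` x) ` {x \<in> X'. x \<subseteq> f ` L}"
  have img: "f ` (L \<inter> f -` x) = x" if "x \<subseteq> f ` L" for x using that by auto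
  have "stick_family L X"
    unfolding stick_family_def
  proof (intro conjI allI impI)
    show "X \<subseteq> ctbl_subsets L"
    proof
      fix z assume "z \<in> X"
      then obtain x where x: "x \<in> X'" "x \<subseteq> f ` L" "z = L \<inter> f -` x" unfolding X_def by blast
      then have "x \<in> ctbl_subsets L'" using X' unfolding stick_family_def by blast
      then have cx: "countable x" "infinite x" unfolding ctbl_subsets_def by auto
      have iz: "inj_on f z" using f x by (auto intro: inj_on_subset)
      have fz: "f ` z = x" using img x by auto
      have "countable z" using countable_image_inj_on[of f z] iz fz cx by auto
      moreover have "infinite z" using fz cx by auto
      ultimately show "z \<in> ctbl_subsets L" using x unfolding ctbl_subsets_def by auto
    qed
  next
    fix y assume y: "y \<subseteq> L \<and> |y| =o aleph1"
    have "inj_on f y" using f y inj_on_subset[of f L y] by blast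
    then have "bij_betw f y (f ` y)" by (rule inj_on_imp_bij_betw)
    then have "|y| =o |f ` y|" by (rule card_of_ordIsoI)
    then have "|f ` y| =o |y|" by (rule ordIso_symmetric)
    then have "|f ` y| =o aleph1" using y ordIso_transitive by auto
    moreover have "f ` y \<subseteq> L'" using f y by auto
    ultimately obtain x where x: "x \<in> X'" "x \<subseteq> f ` y" using X' unfolding stick_family_def by blast
    then have "x \<subseteq> f ` L" using y by auto
    then have "L \<inter> f -` x \<in> X" using x unfolding X_def by blast
    moreover have "L \<inter> f -` x \<subseteq> y"
    proof
      fix a assume a: "a \<in> L \<inter> f -` x"
      then obtain b where "b \<in> y" "f a = f b" using x by auto
      then show "a \<in> y" using a f(1) y by (metis IntD1 inj_on_def subsetD)
    qed
    ultimately show "\<exists>x\<in>X. x \<subseteq> y" by blast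
  qed
  moreover have "|X| \<le>o |X'|"
  proof -
    have 1: "|X| \<le>o |{x \<in> X'. x \<subseteq> f ` L}|" unfolding X_def by (rule card_of_image)
    have 2: "|{x \<in> X'. x \<subseteq> f ` L}| \<le>o |X'|" by (rule card_of_mono1) auto
    show ?thesis using ordLeq_transitive[OF 1 2] .
  qed
  ultimately show ?thesis by (intro exI[of _ X] conjI)
qed

lemma stick_lam_mono:
  assumes "|L| \<le>o |L'|" shows "stick_lam L \<le>o stick_lam L'"
proof -
  obtain f where f: "inj_on f L" "f ` L \<subseteq> L'" using assms[folded card_of_ordLeq] by (elim exE conjE)
  obtain X' where X': "stick_family L' X'" "stick_lam L' = |X'|" using stick_lam_ex[of L'] by (elim exE conjE)
  obtain X where "stick_family L X" "|X| \<le>o |X'|" using transfer_family[OF f X'(1)] by (elim exE conjE)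
  then have "stick_lam L \<le>o |X|" "|X| \<le>o |X'|" using stick_lam_le by auto
  then show ?thesis unfolding X'(2) using ordLeq_transitive by blast
qed


lemma stick_ex: "\<exists>X0. stick_family omega1 X0 \<and> stick = |X0|"
  using stick_lam_ex[of omega1] unfolding stick_def by (elim exE conjE) (intro exI conjI)

lemma aleph1_le_stick: "aleph1 \<le>o stick"
proof -
  obtain X0 where X0: "stick_family omega1 X0" "stick = |X0|" using stick_ex by (elim exE conjE)
  have "uncountable X0"
  proof
    assume cX: "countable X0"
    define a where "a = (\<lambda>x::nat set set. SOME u. u \<in> x)"
    have ax: "a x \<in> x" if "x \<in> X0" for x
    proof -
      have "x \<in> ctbl_subsets omega1" using X0(1) that unfolding stick_family_def by auto
      then have "x \<noteq> {}" unfolding ctbl_subsets_def by auto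
      then show ?thesis unfolding a_def by (simp add: some_in_eq)
    qed
    define y where "y = omega1 - a ` X0"
    have "countable (a ` X0)" using cX by auto
    then have uy: "uncountable y" unfolding y_def using omega1_unc
      by (metis countable_Un_iff Un_Diff_cancel2 sup_commute)
    have "|y| \<le>o |omega1|" by (rule card_of_mono1) (auto simp: y_def)
    then have "|y| \<le>o aleph1" using omega1_iso ordLeq_ordIso_trans by auto
    then have "|y| =o aleph1" using uy le_aleph1_iso by auto
    moreover have "y \<subseteq> omega1" unfolding y_def by auto
    ultimately obtain x where "x \<in> X0" "x \<subseteq> y" using X0(1) unfolding stick_family_def by auto
    then show False using ax unfolding y_def by auto
  qed
  then show ?thesis unfolding X0(2) aleph1_le_iff .
qed

lemma stick_infinite: "infinite (Field stick)"
proof -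
  obtain X0 where X0: "stick_family omega1 X0" "stick = |X0|" using stick_ex by (elim exE conjE)
  have "uncountable X0" using aleph1_le_stick unfolding X0(2) aleph1_le_iff .
  then show ?thesis unfolding X0(2) Field_card_of using countable_finite by auto
qed

lemma ctbl_ge:
  assumes "infinite K" shows "|K| \<le>o |ctbl_subsets K|"
proof -
  obtain N where N: "N \<subseteq> K" "countable N" "infinite N" using infinite_countable_subset'[OF assms] by blast
  define g where "g = (\<lambda>a. if a \<in> N then N - {a} else insert a N)"
  have "inj_on g K"
  proof (rule inj_onI)
    fix a b assume ab: "a \<in> K" "b \<in> K" "g a = g b"
    show "a = b"
    proof (cases "a \<in> N")
      case True
      show ?thesis
      proof (cases "b \<in> N")
        case True
        then show ?thesis using ab \<open>a \<in> N\<close> unfolding g_def by auto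
      next
        case False
        then have "b \<in> g b" unfolding g_def by auto
        moreover have "b \<notin> g a" using \<open>a \<in> N\<close> False unfolding g_def by auto
        ultimately show ?thesis using ab by auto
      qed
    next
      case False
      then have "a \<in> g a" unfolding g_def by auto
      then have "a \<in> g b" using ab by simp
      then show ?thesis using False unfolding g_def by (auto split: if_splits)
    qed
  qed
  moreover have "\<forall>a\<in>K. g a \<in> ctbl_subsets K"
    using N unfolding g_def ctbl_subsets_def by auto
  ultimately show ?thesis using card_of_ordLeqI[of g K "ctbl_subsets K"] by blast
qed

definition Kc :: "nat set set" where "Kc = UNIV"

lemma Kc_iso: "|UNIV::nat set set| =o |Kc|"
  unfolding Kc_def by (rule ordIso_refl[OF card_of_Card_order])

lemma Kc_unc: "uncountable Kc"
proof
  assume "countable Kc"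
  then have "|Kc| \<le>o |UNIV::nat set|" using countable_card_of_nat by auto
  then have "|UNIV::nat set set| \<le>o |UNIV::nat set|" using Kc_iso ordIso_ordLeq_trans by auto
  moreover have "|UNIV::nat set| <o |Pow (UNIV::nat set)|" by (rule card_of_Pow)
  ultimately show False using not_ordLess_ordLeq by auto
qed

lemma Kc_ctbl_le: "|ctbl_subsets Kc| \<le>o |Kc|"
proof -
  have 1: "|ctbl_subsets Kc| \<le>o |{X. X \<subseteq> Kc \<and> countable X \<and> X \<noteq> {}}|"
    by (rule card_of_mono1) (auto simp: ctbl_subsets_def)
  have 2: "|{X. X \<subseteq> Kc \<and> countable X \<and> X \<noteq> {}}| \<le>o |{f::nat \<Rightarrow> nat set. range f \<subseteq> Kc}|"
    by (rule card_of_countable_sets_range)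
  define enc where "enc = (\<lambda>f::nat \<Rightarrow> nat set. {prod_encode (n, k) | n k. k \<in> f n})"
  have 3: "|{f::nat \<Rightarrow> nat set. range f \<subseteq> Kc}| \<le>o |UNIV::nat set set|"
  proof (rule card_of_ordLeqI[of enc])
    show "inj_on enc {f. range f \<subseteq> Kc}"
    proof (rule inj_onI)
      fix f g assume f: "f \<in> {f. range f \<subseteq> Kc}" and g: "g \<in> {f. range f \<subseteq> Kc}" and e: "enc f = enc g"
      show "f = g"
      proof
        fix n
        have "k \<in> f n \<longleftrightarrow> k \<in> g n" for k
        proof -
          have "k \<in> f n \<longleftrightarrow> prod_encode (n, k) \<in> enc f"
            unfolding enc_def by (auto dest: inj_onD[OF inj_prod_encode, simplified])
          moreover have "k \<in> g n \<longleftrightarrow> prod_encode (n, k) \<in> enc g"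
            unfolding enc_def by (auto dest: inj_onD[OF inj_prod_encode, simplified])
          ultimately show ?thesis using e by simp
        qed
        then show "f n = g n" by auto
      qed
    qed
  qed auto
  have "|ctbl_subsets Kc| \<le>o |UNIV::nat set set|" using ordLeq_transitive[OF ordLeq_transitive[OF 1 2] 3] .
  then show ?thesis using ordLeq_ordIso_trans[OF _ Kc_iso] by auto
qed

lemma Kc_witness: "stick'_witness Kc"
  unfolding stick'_witness_def
proof (intro conjI exI[of _ "ctbl_subsets Kc"])
  show "aleph1 \<le>o |Kc|" using Kc_unc aleph1_le_iff by auto
  show "ctbl_subsets Kc \<subseteq> ctbl_subsets Kc" by simp
  show "|ctbl_subsets Kc| =o |Kc|" using Kc_ctbl_le ctbl_ge[of Kc] Kc_unc countable_finite ordIso_iff_ordLeq by auto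
  show "\<forall>y. y \<subseteq> Kc \<and> |y| =o aleph1 \<longrightarrow> (\<exists>x\<in>ctbl_subsets Kc. x \<subseteq> y)"
    using ctbl_family[of Kc] unfolding stick_family_def by auto
qed

lemma stick'_ex: "\<exists>K::nat set set. stick'_witness K \<and> stick' = |K| \<and>
       (\<forall>K'::nat set set. stick'_witness K' \<longrightarrow> |K| \<le>o |K'| )"
proof -
  let ?R = "{|K| | K::nat set set. stick'_witness K}"
  have ne: "?R \<noteq> {}" using Kc_witness by blast
  have wo: "\<forall>r\<in>?R. Well_order r" using card_of_Well_order by blast
  obtain r where "r \<in> ?R" "\<forall>r'\<in>?R. r \<le>o r'" using exists_minim_Well_order[OF ne wo] by (elim bexE)
  then have ex: "\<exists>r. \<exists>K::nat set set. stick'_witness K \<and> r = |K| \<and> (\<forall>K'::nat set set. stick'_witness K' \<longrightarrow> |K| \<le>o |K'| )"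
    by blast
  show ?thesis using someI_ex[OF ex] unfolding stick'_def by (elim exE conjE) (intro exI conjI)
qed

lemma stick''_ex: assumes "stick''_witness (K0::nat set set)"
  shows "\<exists>K::nat set set. stick''_witness K \<and> stick'' = |K| \<and>
       (\<forall>K'::nat set set. stick''_witness K' \<longrightarrow> |K| \<le>o |K'| )"
proof -
  let ?R = "{|K| | K::nat set set. stick''_witness K}"
  have ne: "?R \<noteq> {}" using assms by blast
  have wo: "\<forall>r\<in>?R. Well_order r" using card_of_Well_order by blast
  obtain r where "r \<in> ?R" "\<forall>r'\<in>?R. r \<le>o r'" using exists_minim_Well_order[OF ne wo] by (elim bexE)
  then have ex: "\<exists>r. \<exists>K::nat set set. stick''_witness K \<and> r = |K| \<and> (\<forall>K'::nat set set. stick''_witness K' \<longrightarrow> |K| \<le>o |K'| )"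
    by blast
  show ?thesis using someI_ex[OF ex] unfolding stick''_def by (elim exE conjE) (intro exI conjI)
qed

lemma witness_family: "stick'_witness K \<Longrightarrow> stick_lam K \<le>o |K|"
proof -
  assume "stick'_witness K"
  then obtain X where X: "X \<subseteq> ctbl_subsets K" "|X| =o |K|"
      "\<forall>y. y \<subseteq> K \<and> |y| =o aleph1 \<longrightarrow> (\<exists>x\<in>X. x \<subseteq> y)"
    unfolding stick'_witness_def by (elim exE conjE) auto
  then have "stick_family K X" unfolding stick_family_def by auto
  then have "stick_lam K \<le>o |X|" by (rule stick_lam_le)
  then show ?thesis using X(2) ordLeq_ordIso_trans by auto
qed

lemma part_a: "stick \<le>o stick'"
proof -
  obtain K where K: "stick'_witness K" "stick' = |K|" using stick'_ex by (elim exE conjE)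
  have "|omega1| \<le>o |K|" using K(1) omega1_iso unfolding stick'_witness_def
    using ordIso_ordLeq_trans by auto
  then have "stick \<le>o stick_lam K" unfolding stick_def by (rule stick_lam_mono)
  then show ?thesis using witness_family[OF K(1)] K(2) ordLeq_transitive by auto
qed

lemma part_d: "stick \<le>o stick_lam (Field stick) \<and> stick_lam (Field stick) \<le>o stick'"
proof
  obtain X0 where X0: "stick_family omega1 X0" "stick = |X0|" using stick_ex by (elim exE conjE)
  have F: "Field stick = X0" unfolding X0(2) Field_card_of ..
  have "|omega1| \<le>o |X0|" using aleph1_le_stick omega1_iso X0(2) ordIso_ordLeq_trans by auto
  then show "stick \<le>o stick_lam (Field stick)" unfolding F unfolding stick_def by (rule stick_lam_mono)
  obtain K where K: "stick'_witness K" "stick' = |K|" using stick'_ex by (elim exE conjE)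
  have "|X0| \<le>o |K|" using part_a unfolding X0(2) K(2) .
  then have "stick_lam X0 \<le>o stick_lam K" by (rule stick_lam_mono)
  then show "stick_lam (Field stick) \<le>o stick'" unfolding F using witness_family[OF K(1)] K(2) ordLeq_transitive by auto
qed


lemma union_family:
  fixes M :: "'a set" and S :: "'b set" and I :: "'c set"
  assumes S: "infinite S" and I: "|I| \<le>o |S|"
    and T: "\<forall>i\<in>I. T i \<subseteq> M \<and> (\<exists>X. stick_family (T i) X \<and> |X| \<le>o |S| )"
    and cov: "\<forall>y. y \<subseteq> M \<and> |y| =o aleph1 \<longrightarrow> (\<exists>i\<in>I. \<exists>y'. y' \<subseteq> y \<inter> T i \<and> |y'| =o aleph1)"
  shows "\<exists>X. stick_family M X \<and> |X| \<le>o |S|"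
proof -
  define Xf where "Xf = (\<lambda>i. SOME X. stick_family (T i) X \<and> |X| \<le>o |S| )"
  have Xf: "stick_family (T i) (Xf i) \<and> |Xf i| \<le>o |S|" if "i \<in> I" for i
    unfolding Xf_def using T that by (metis (no_types, lifting) someI_ex)
  define X where "X = (\<Union>i\<in>I. Xf i)"
  have "stick_family M X"
    unfolding stick_family_def
  proof (intro conjI allI impI)
    show "X \<subseteq> ctbl_subsets M"
    proof
      fix x assume "x \<in> X"
      then obtain i where i: "i \<in> I" "x \<in> Xf i" unfolding X_def by auto
      then have "x \<in> ctbl_subsets (T i)" using Xf[OF i(1)] unfolding stick_family_def by auto
      then show "x \<in> ctbl_subsets M" using T i(1) unfolding ctbl_subsets_def by auto
    qed
  next
    fix y assume y: "y \<subseteq> M \<and> |y| =o aleph1"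
    then obtain i y' where i: "i \<in> I" "y' \<subseteq> y \<inter> T i" "|y'| =o aleph1" using cov by meson
    then obtain x where "x \<in> Xf i" "x \<subseteq> y'" using Xf[OF i(1)] unfolding stick_family_def by auto
    then show "\<exists>x\<in>X. x \<subseteq> y" using i unfolding X_def by auto
  qed
  moreover have "|X| \<le>o |S|" unfolding X_def
    using card_of_UNION_ordLeq_infinite[OF S I] Xf by auto
  ultimately show ?thesis by (intro exI[of _ X] conjI)
qed

lemma uncountable_infinite: "uncountable A \<Longrightarrow> infinite A"
  using countable_finite by auto

lemma step:
  fixes M :: "'a set" and S :: "'b set" and F :: "'b set set"
  assumes F: "countable F" "\<forall>A. A \<subseteq> S \<and> infinite A \<longrightarrow> (\<exists>B\<in>F. |A| =o |B| )"
    and S: "aleph1 \<le>o |S|"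
    and base: "\<forall>M::'a set. |M| \<le>o aleph1 \<longrightarrow> (\<exists>X. stick_family M X \<and> |X| \<le>o |S| )"
    and IH: "\<forall>M'::'a set. |M'| <o |M| \<longrightarrow> (\<exists>X. stick_family M' X \<and> |X| \<le>o |S| )"
    and MS: "|M| \<le>o |S|"
  shows "\<exists>X. stick_family M X \<and> |X| \<le>o |S|"
proof (cases "|M| \<le>o aleph1")
  case True
  then show ?thesis using base by auto
next
  case False
  then have Mbig: "aleph1 <o |M|"
    using not_ordLeq_iff_ordLess[OF aleph1_Card[unfolded card_order_on_def, THEN conjunct1] card_of_Well_order]
    by auto
  have Sinf: "infinite S" using S aleph1_le_iff uncountable_infinite by auto
  define r where "r = |M|"
  have cr: "Card_order r" unfolding r_def by (rule card_of_Card_order)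
  have Fr: "Field r = M" unfolding r_def by (rule Field_card_of)
  have wr: "Well_order r" unfolding r_def by (rule card_of_Well_order)
  then have rr: "Refl r" "trans r" "antisym r" "Total r"
    unfolding well_order_on_def linear_order_on_def partial_order_on_def preorder_on_def by auto
  have Minf: "infinite M" using Mbig ordLess_imp_ordLeq aleph1_le_iff uncountable_infinite by blast
  have uS: "|underS r a| <o |M|" if "a \<in> M" for a
    using card_of_underS[OF cr] that Fr r_def by auto
  have uSM: "underS r a \<subseteq> M" for a using Fr unfolding underS_def Field_def by auto
  show ?thesis
  proof (cases "\<forall>y. y \<subseteq> M \<and> |y| =o aleph1 \<longrightarrow> (\<exists>a\<in>M. y \<subseteq> underS r a)")
    case True
    show ?thesis
    proof (rule union_family[OF Sinf MS, of "underS r"])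
      show "\<forall>i\<in>M. underS r i \<subseteq> M \<and> (\<exists>X. stick_family (underS r i) X \<and> |X| \<le>o |S| )"
        using IH uS uSM by auto
      show "\<forall>y. y \<subseteq> M \<and> |y| =o aleph1 \<longrightarrow> (\<exists>i\<in>M. \<exists>y'. y' \<subseteq> y \<inter> underS r i \<and> |y'| =o aleph1)"
        using True by (metis inf.orderE inf_le1)
    qed
  next
    case False
    then obtain y0 where y0: "y0 \<subseteq> M" "|y0| =o aleph1" "\<forall>a\<in>M. \<not> y0 \<subseteq> underS r a" by auto
    have y0unc: "uncountable y0" using y0(2) aleph1_le_iff ordIso_iff_ordLeq by blast
    have y0small: "|y0| <o |M|" using y0(2) Mbig ordIso_ordLess_trans by blast
    have B1: "\<exists>x\<in>y0. (a, x) \<in> r" if a: "a \<in> M" for a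
    proof -
      obtain x where x: "x \<in> y0" "x \<notin> underS r a" using y0(3) a by auto
      then have "(x, a) \<notin> r \<or> x = a" unfolding underS_def by auto
      then have "(a, x) \<in> r"
      proof
        assume "(x, a) \<notin> r"
        moreover have "x \<in> Field r" "a \<in> Field r" using x y0 a Fr by auto
        moreover have "x \<noteq> a \<longrightarrow> (x, a) \<in> r \<or> (a, x) \<in> r"
          using rr(4) \<open>x \<in> Field r\<close> \<open>a \<in> Field r\<close> unfolding total_on_def by blast
        moreover have "(a, a) \<in> r" using refl_onD[OF rr(1)] \<open>a \<in> Field r\<close> by blast
        ultimately show ?thesis by blast
      next
        assume "x = a"
        have "a \<in> Field r" using a Fr by simp
        then show ?thesis using refl_onD[OF rr(1)] \<open>x = a\<close> by blast
      qed
      then show ?thesis using x by auto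
    qed
    have C: "\<exists>a'\<in>M. |underS r a \<union> y0| <o |underS r a'|" if a: "a \<in> M" for a
    proof (rule ccontr)
      assume "\<not> ?thesis"
      then have le: "\<forall>a'\<in>M. |underS r a'| \<le>o |underS r a \<union> y0|"
        using not_ordLess_iff_ordLeq card_of_Well_order by blast
      define T where "T = underS r a \<union> y0"
      have Tinf: "infinite T" unfolding T_def using y0unc uncountable_infinite by auto
      have "|under r x| \<le>o |T|" if x: "x \<in> y0" for x
      proof -
        have xM: "x \<in> M" using x y0 by auto
        have "x \<in> Field r" using xM Fr by simp
        then have "(x, x) \<in> r" using refl_onD[OF rr(1)] by blast
        then have ueq: "under r x = {x} \<union> underS r x" unfolding under_def underS_def by auto
        have "T \<noteq> {}" using Tinf by auto
        moreover have "|{x}| \<le>o |T|" using card_of_singl_ordLeq[OF \<open>T \<noteq> {}\<close>] .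
        moreover have "|underS r x| \<le>o |T|" using le xM unfolding T_def by auto
        ultimately show ?thesis
          using card_of_Un_ordLeq_infinite_Field[of "|T|" "{x}" "underS r x", OF _ _ _ card_of_Card_order]
            Tinf ueq unfolding Field_card_of by simp
      qed
      moreover have "|y0| \<le>o |T|" unfolding T_def by (rule card_of_mono1) auto
      ultimately have "|\<Union>x\<in>y0. under r x| \<le>o |T|"
        using card_of_UNION_ordLeq_infinite[OF Tinf] by auto
      moreover have "M \<subseteq> (\<Union>x\<in>y0. under r x)" using B1 unfolding under_def by auto
      ultimately have "|M| \<le>o |T|" using card_of_mono1 ordLeq_transitive by blast
      moreover have "|T| <o |M|" unfolding T_def
        using card_of_Un_ordLess_infinite[OF Minf uS[OF a] y0small] .
      ultimately show False using not_ordLess_ordLeq by blast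
    qed
    define SB where "SB = (\<lambda>B::'b set. {m\<in>M. |underS r m| \<le>o |B|})"
    define F' where "F' = {B\<in>F. \<exists>c\<in>M. c \<notin> SB B}"
    have cover: "\<exists>B\<in>F'. a \<in> SB B" if a: "a \<in> M" for a
    proof -
      obtain a1 where a1: "a1 \<in> M" "|underS r a \<union> y0| <o |underS r a1|" using C[OF a] by blast
      obtain a2 where a2: "a2 \<in> M" "|underS r a1 \<union> y0| <o |underS r a2|" using C[OF a1(1)] by blast
      have "infinite (underS r a \<union> y0)" using y0unc uncountable_infinite by auto
      then have inf1: "infinite (underS r a1)"
        using a1(2) ordLess_imp_ordLeq card_of_ordLeq_finite by blast
      have "|underS r a1| \<le>o |S|" using card_of_mono1[OF uSM[of a1]] MS ordLeq_transitive by blast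
      then obtain h where h: "inj_on h (underS r a1)" "h ` underS r a1 \<subseteq> S"
        using card_of_ordLeq[symmetric] by (metis (no_types, lifting))
      have hiso: "|underS r a1| =o |h ` underS r a1|"
        using card_of_ordIsoI[OF inj_on_imp_bij_betw[OF h(1)]] .
      have "infinite (h ` underS r a1)" using inf1 h(1) finite_imageD by blast
      then obtain B where B: "B \<in> F" "|h ` underS r a1| =o |B|" using F(2) h(2) by blast
      have iso: "|underS r a1| =o |B|" using ordIso_transitive[OF hiso B(2)] .
      have "|underS r a| \<le>o |underS r a \<union> y0|" by (rule card_of_mono1) auto
      then have "|underS r a| \<le>o |B|"
        using ordLeq_ordLess_trans[OF _ a1(2)] ordLess_imp_ordLeq ordLeq_ordIso_trans iso by blast
      then have aS: "a \<in> SB B" unfolding SB_def using a by auto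
      have "|B| \<le>o |underS r a1 \<union> y0|"
        using ordIso_ordLeq_trans[OF ordIso_symmetric[OF iso] card_of_mono1[of "underS r a1" "underS r a1 \<union> y0"]] by auto
      then have "|B| <o |underS r a2|" using ordLeq_ordLess_trans a2(2) by blast
      then have "a2 \<notin> SB B" unfolding SB_def using not_ordLess_ordLeq by blast
      then have "B \<in> F'" unfolding F'_def using B(1) a2(1) by auto
      then show ?thesis using aS by auto
    qed
    have SBsmall: "|SB B| <o |M|" if B: "B \<in> F'" for B
    proof -
      obtain c where c: "c \<in> M" "c \<notin> SB B" using B unfolding F'_def by auto
      have "SB B \<subseteq> underS r c"
      proof
        fix m assume m: "m \<in> SB B"
        show "m \<in> underS r c"
        proof (rule ccontr)
          assume nm: "m \<notin> underS r c"
          have mM: "m \<in> M" using m unfolding SB_def by auto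
          have "m \<noteq> c" using m c by auto
          then have "(m, c) \<notin> r" using nm unfolding underS_def by auto
          moreover have "m \<in> Field r" "c \<in> Field r" using mM c(1) Fr by auto
          ultimately have "(c, m) \<in> r" using rr(4) \<open>m \<noteq> c\<close> unfolding total_on_def by blast
          then have "underS r c \<subseteq> underS r m" using underS_incr[OF rr(2) rr(3)] by auto
          then have "|underS r c| \<le>o |underS r m|" by (rule card_of_mono1)
          moreover have "|underS r m| \<le>o |B|" using m unfolding SB_def by auto
          ultimately have "c \<in> SB B" unfolding SB_def using c(1) ordLeq_transitive by blast
          then show False using c by auto
        qed
      qed
      then have "|SB B| \<le>o |underS r c|" by (rule card_of_mono1)
      then show ?thesis using uS[OF c(1)] ordLeq_ordLess_trans by blast
    qed
    have cF': "countable F'" using F(1) unfolding F'_def by auto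
    have IF': "|F'| \<le>o |S|"
    proof -
      have "|F'| \<le>o natLeq" using cF' countable_card_le_natLeq by auto
      moreover have "natLeq \<le>o |S|" using Sinf infinite_iff_natLeq_ordLeq by auto
      ultimately show ?thesis using ordLeq_transitive by blast
    qed
    show ?thesis
    proof (rule union_family[OF Sinf IF', of SB])
      show "\<forall>i\<in>F'. SB i \<subseteq> M \<and> (\<exists>X. stick_family (SB i) X \<and> |X| \<le>o |S| )"
        using IH SBsmall unfolding SB_def by auto
      show "\<forall>y. y \<subseteq> M \<and> |y| =o aleph1 \<longrightarrow> (\<exists>i\<in>F'. \<exists>y'. y' \<subseteq> y \<inter> SB i \<and> |y'| =o aleph1)"
      proof (intro allI impI)
        fix y assume y: "y \<subseteq> M \<and> |y| =o aleph1"
        have yunc: "uncountable y" using y aleph1_le_iff ordIso_iff_ordLeq by blast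
        have "y = (\<Union>B\<in>F'. y \<inter> SB B)" using cover y by blast
        then obtain B where B: "B \<in> F'" "uncountable (y \<inter> SB B)"
          using yunc cF' by (metis countable_UN)
        have "|y \<inter> SB B| \<le>o |y|" by (rule card_of_mono1) auto
        then have "|y \<inter> SB B| \<le>o aleph1" using y ordLeq_ordIso_trans by blast
        then have "|y \<inter> SB B| =o aleph1" using le_aleph1_iso B(2) by blast
        then show "\<exists>i\<in>F'. \<exists>y'. y' \<subseteq> y \<inter> SB i \<and> |y'| =o aleph1" using B(1) by blast
      qed
    qed
  qed
qed


lemma all_small:
  fixes S :: "'b set" and F :: "'b set set"
  assumes F: "countable F" "\<forall>A. A \<subseteq> S \<and> infinite A \<longrightarrow> (\<exists>B\<in>F. |A| =o |B| )"
    and S: "aleph1 \<le>o |S|"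
    and base: "\<forall>M::'a set. |M| \<le>o aleph1 \<longrightarrow> (\<exists>X. stick_family M X \<and> |X| \<le>o |S| )"
  shows "\<forall>M::'a set. |M| \<le>o |S| \<longrightarrow> (\<exists>X. stick_family M X \<and> |X| \<le>o |S| )"
proof (rule ccontr)
  assume "\<not> ?thesis"
  then obtain M0 :: "'a set" where M0: "|M0| \<le>o |S|" "\<not> (\<exists>X. stick_family M0 X \<and> |X| \<le>o |S| )" by blast
  let ?R = "{|M| | M::'a set. |M| \<le>o |S| \<and> \<not> (\<exists>X. stick_family M X \<and> |X| \<le>o |S| )}"
  have ne: "?R \<noteq> {}" using M0 by blast
  have wo: "\<forall>r\<in>?R. Well_order r" using card_of_Well_order by blast
  obtain r where r: "r \<in> ?R" "\<forall>r'\<in>?R. r \<le>o r'" using exists_minim_Well_order[OF ne wo] by (elim bexE)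
  then obtain M where M: "r = |M|" "|M| \<le>o |S|" "\<not> (\<exists>X. stick_family M X \<and> |X| \<le>o |S| )" by blast
  have IH: "\<forall>M'::'a set. |M'| <o |M| \<longrightarrow> (\<exists>X. stick_family M' X \<and> |X| \<le>o |S| )"
  proof (intro allI impI)
    fix M' :: "'a set" assume lt: "|M'| <o |M|"
    show "\<exists>X. stick_family M' X \<and> |X| \<le>o |S|"
    proof (rule ccontr)
      assume nq: "\<not> ?thesis"
      have "|M'| \<le>o |S|" using lt M(2) ordLess_imp_ordLeq ordLeq_transitive by blast
      then have "|M'| \<in> ?R" using nq by blast
      then have "|M| \<le>o |M'|" using r(2) M(1) by auto
      then show False using lt not_ordLess_ordLeq by blast
    qed
  qed
  have "\<exists>X. stick_family M X \<and> |X| \<le>o |S|" using step[OF F S base IH M(2)] .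
  then show False using M(3) by blast
qed

lemma enc_le: "|A :: (nat \<Rightarrow> nat set) set| \<le>o |UNIV :: nat set set|"
proof -
  define enc where "enc = (\<lambda>f::nat \<Rightarrow> nat set. {prod_encode (n, k) | n k. k \<in> f n})"
  show ?thesis
  proof (rule card_of_ordLeqI[of enc])
    show "inj_on enc A"
    proof (rule inj_onI)
      fix f g assume e: "enc f = enc g"
      show "f = g"
      proof
        fix n
        have "k \<in> f n \<longleftrightarrow> k \<in> g n" for k
        proof -
          have "k \<in> f n \<longleftrightarrow> prod_encode (n, k) \<in> enc f"
            unfolding enc_def by (auto dest: inj_onD[OF inj_prod_encode, simplified])
          moreover have "k \<in> g n \<longleftrightarrow> prod_encode (n, k) \<in> enc g"
            unfolding enc_def by (auto dest: inj_onD[OF inj_prod_encode, simplified])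
          ultimately show ?thesis using e by simp
        qed
        then show "f n = g n" by auto
      qed
    qed
  qed auto
qed

lemma part_b: "below_aleph_omega1 stick \<longrightarrow> stick =o stick' \<and> stick'' \<le>o stick"
proof
  assume bel: "below_aleph_omega1 stick"
  obtain X0 where X0: "stick_family omega1 X0" "stick = |X0|" using stick_ex by (elim exE conjE)
  have FX: "Field stick = X0" unfolding X0(2) Field_card_of ..
  obtain F :: "nat set set set set" where F: "countable F" "\<forall>A. A \<subseteq> X0 \<and> infinite A \<longrightarrow> (\<exists>B\<in>F. |A| =o |B| )"
    using bel unfolding below_aleph_omega1_def FX by blast
  have S: "aleph1 \<le>o |X0|" using aleph1_le_stick unfolding X0(2) .
  have base: "\<forall>M::nat set set. |M| \<le>o aleph1 \<longrightarrow> (\<exists>X. stick_family M X \<and> |X| \<le>o |X0| )"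
  proof (intro allI impI)
    fix M :: "nat set set" assume "|M| \<le>o aleph1"
    then have "|M| \<le>o |omega1|" using ordLeq_ordIso_trans[OF _ ordIso_symmetric[OF omega1_iso]] by blast
    then obtain f where f: "inj_on f M" "f ` M \<subseteq> omega1" using card_of_ordLeq[symmetric] by (metis (no_types, lifting))
    show "\<exists>X. stick_family M X \<and> |X| \<le>o |X0|" using transfer_family[OF f X0(1)] .
  qed
  have small: "\<forall>M::nat set set. |M| \<le>o |X0| \<longrightarrow> (\<exists>X. stick_family M X \<and> |X| \<le>o |X0| )"
    using all_small[OF F S base] .
  have c1: "|X0| \<le>o |{X. X \<subseteq> omega1 \<and> countable X \<and> X \<noteq> {}}|"
    using X0(1) unfolding stick_family_def ctbl_subsets_def by (intro card_of_mono1) auto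
  have c2: "|{X. X \<subseteq> omega1 \<and> countable X \<and> X \<noteq> {}}| \<le>o |{f::nat \<Rightarrow> nat set. range f \<subseteq> omega1}|"
    by (rule card_of_countable_sets_range)
  have c3: "|{f::nat \<Rightarrow> nat set. range f \<subseteq> omega1}| \<le>o |UNIV :: nat set set|" by (rule enc_le)
  have "|X0| \<le>o |UNIV :: nat set set|" using ordLeq_transitive[OF ordLeq_transitive[OF c1 c2] c3] .
  then obtain g where g: "inj_on g X0" "g ` X0 \<subseteq> (UNIV :: nat set set)" using card_of_ordLeq[symmetric] by (metis (no_types, lifting))
  define K where "K = g ` X0"
  have KX0: "|X0| =o |K|" unfolding K_def using card_of_ordIsoI[OF inj_on_imp_bij_betw[OF g(1)]] .
  have KX0': "|K| =o |X0|" using ordIso_symmetric[OF KX0] .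
  have "|K| \<le>o |X0|" using ordIso_imp_ordLeq[OF KX0'] .
  then obtain X where X: "stick_family K X" "|X| \<le>o |X0|" using small by blast
  have Kunc: "uncountable K" using ordLeq_ordIso_trans[OF S KX0] unfolding aleph1_le_iff .
  have Kinf: "infinite K" using Kunc uncountable_infinite by blast
  obtain \<iota> where \<iota>: "inj_on \<iota> K" "\<iota> ` K \<subseteq> ctbl_subsets K" using ctbl_ge[OF Kinf] card_of_ordLeq[symmetric] by (metis (no_types, lifting))
  define X' where "X' = X \<union> \<iota> ` K"
  have X'sub: "X' \<subseteq> ctbl_subsets K" using X(1) \<iota>(2) unfolding X'_def stick_family_def by auto
  have X'cov: "\<forall>y. y \<subseteq> K \<and> |y| =o aleph1 \<longrightarrow> (\<exists>x\<in>X'. x \<subseteq> y)"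
    using X(1) unfolding X'_def stick_family_def by blast
  have "|X| \<le>o |K|" using ordLeq_ordIso_trans[OF X(2) KX0] .
  moreover have "|\<iota> ` K| \<le>o |K|" by (rule card_of_image)
  ultimately have le1: "|X'| \<le>o |K|" unfolding X'_def
    using card_of_Un_ordLeq_infinite_Field[of "|K|" X "\<iota> ` K", OF _ _ _ card_of_Card_order] Kinf
    unfolding Field_card_of by simp
  have le2: "|K| \<le>o |X'|" using card_of_ordLeqI[of \<iota> K X'] \<iota>(1) unfolding X'_def by auto
  have isoX': "|X'| =o |K|" using ordIso_iff_ordLeq[THEN iffD2, OF conjI[OF le1 le2]] .
  have a1K: "aleph1 \<le>o |K|" unfolding aleph1_le_iff by (rule Kunc)
  have w1: "stick'_witness K" unfolding stick'_witness_def
  proof (intro conjI exI[of _ X'])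
    show "aleph1 \<le>o |K|" by fact
    show "X' \<subseteq> ctbl_subsets K" by fact
    show "|X'| =o |K|" by fact
    show "\<forall>y. y \<subseteq> K \<and> |y| =o aleph1 \<longrightarrow> (\<exists>x\<in>X'. x \<subseteq> y)" by fact
  qed
  have w2: "stick''_witness K" unfolding stick''_witness_def
  proof (intro conjI exI[of _ X'])
    show "aleph1 \<le>o |K|" by fact
    show "X' \<subseteq> ctbl_subsets K" by fact
    show "|X'| =o |K|" by fact
    show "\<forall>y. y \<subseteq> K \<and> |y| =o |K| \<longrightarrow> (\<exists>x\<in>X'. x \<subseteq> y)"
    proof (intro allI impI)
      fix y assume y: "y \<subseteq> K \<and> |y| =o |K|"
      have a1y: "aleph1 \<le>o |y|" by (rule ordLeq_ordIso_trans[OF a1K ordIso_symmetric[OF conjunct2[OF y]]])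
      have "|omega1| \<le>o |y|" by (rule ordIso_ordLeq_trans[OF omega1_iso a1y])
      then obtain h where h: "inj_on h omega1" "h ` omega1 \<subseteq> y" using card_of_ordLeq[symmetric] by (metis (no_types, lifting))
      have hiso: "|omega1| =o |h ` omega1|" using card_of_ordIsoI[OF inj_on_imp_bij_betw[OF h(1)]] .
      have "|h ` omega1| =o aleph1" by (rule ordIso_transitive[OF ordIso_symmetric[OF hiso] omega1_iso])
      moreover have "h ` omega1 \<subseteq> K" using h(2) y by auto
      ultimately obtain x where "x \<in> X'" "x \<subseteq> h ` omega1" using X'cov[rule_format, OF conjI] by blast
      then show "\<exists>x\<in>X'. x \<subseteq> y" using h(2) by blast
    qed
  qed
  obtain K1 where K1: "stick' = |K1|" "\<forall>K'::nat set set. stick'_witness K' \<longrightarrow> |K1| \<le>o |K'|"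
    using stick'_ex by (elim exE conjE)
  have s1: "stick' \<le>o |K|" using K1 w1 by auto
  have s2: "stick' \<le>o stick" unfolding X0(2) by (rule ordLeq_ordIso_trans[OF s1 KX0'])
  have "stick =o stick'" by (rule ordIso_iff_ordLeq[THEN iffD2, OF conjI[OF part_a s2]])
  moreover
  obtain K2 where K2: "stick'' = |K2|" "\<forall>K'::nat set set. stick''_witness K' \<longrightarrow> |K2| \<le>o |K'|"
    using stick''_ex[OF w2] by (elim exE conjE)
  have s3: "stick'' \<le>o |K|" using K2 w2 by auto
  have "stick'' \<le>o stick" unfolding X0(2) by (rule ordLeq_ordIso_trans[OF s3 KX0'])
  ultimately show "stick =o stick' \<and> stick'' \<le>o stick" by blast
qed

theorem lemma1p1:
  fixes L :: "'a set" and L' :: "'b set"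
  shows "stick \<le>o stick'
     \<and> (below_aleph_omega1 stick \<longrightarrow> stick =o stick' \<and> stick'' \<le>o stick)
     \<and> (uncountable L \<and> (card_of L) \<le>o (card_of L') \<longrightarrow> stick_lam L \<le>o stick_lam L')
     \<and> stick \<le>o stick_lam (Field stick) \<and> stick_lam (Field stick) \<le>o stick'"
  using part_a part_b part_d stick_lam_mono by blast

end
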